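(* Let $n>2$, let $\mathbf{U}$ be a known real symmetric positive definite $n\times n$ matrix, let $\mathbf{1}=(1,\dots,1)^T\in\mathbb{R}^n$, and let $\mathbf{x}\in\mathbb{R}^n$. Consider the random effects model $M_{RE}$, in which $\mathbf{x}\mid\mu,\tau_{RE}\sim N(\mu\mathbf{1},\mathbf{U}+\tau_{RE}^2\mathbf{I})$, i.e. $$f(\mathbf{x}\mid\mu,\tau_{RE},M_{RE})=\frac{\big(\det(\mathbf{U}+\tau_{RE}^2\mathbf{I})\big)^{-1/2}}{(2\pi)^{n/2}}\exp\Big(-\tfrac12(\mathbf{x}-\mu\mathbf{1})^T(\mathbf{U}+\tau_{RE}^2\mathbf{I})^{-1}(\mathbf{x}-\mu\mathbf{1})\Big),\quad \mu\in\mathbb{R},\ \tau_{RE}>0,$$ with the (improper) prior $\pi^N(\mu,\tau_{RE})=\pi^N(\tau_{RE})=\sqrt{\tau_{RE}^2\,\mathrm{tr}\big((\mathbf{U}+\tau_{RE}^2\mathbf{I})^{-2}\big)}$ on $\mathbb{R}\times(0,\infty)$. Then: (i) The marginal distribution of the whole sample, $m(\mathbf{x}\mid M_{RE})=\int_0^\infty\int_{-\infty}^\infty f(\mathbf{x}\mid\mu,\tau_{RE},M_{RE})\pi^N(\tau_{RE})\,d\mu\,d\tau_{RE}$, equals $$m(\mathbf{x}\mid M_{RE})=\int_0^\infty\frac{(2\pi)^{-\frac{n-1}{2}}\big(\det(\mathbf{U}+\tau_{RE}^2\mathbf{I})\big)^{-1/2}}{\sqrt{\mathbf{1}^T(\mathbf{U}+\tau_{RE}^2\mathbf{I})^{-1}\mathbf{1}}}\exp\Big(-\tfrac12\mathbf{x}^T\mathbf{Q}(\tau_{RE}^2)\mathbf{x}\Big)\pi^N(\tau_{RE})\,d\tau_{RE},$$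 where $\mathbf{Q}(\tau^2)=(\mathbf{U}+\tau^2\mathbf{I})^{-1}-\dfrac{(\mathbf{U}+\tau^2\mathbf{I})^{-1}\mathbf{1}\mathbf{1}^T(\mathbf{U}+\tau^2\mathbf{I})^{-1}}{\mathbf{1}^T(\mathbf{U}+\tau^2\mathbf{I})^{-1}\mathbf{1}}$. (ii) The size of a minimal training sample is $2$: for a single observation $x_i$ (modeled by $x_i\mid\mu,\tau_{RE}\sim N(\mu,u_{ii}+\tau_{RE}^2)$, with the prior $\sqrt{\tau_{RE}^2\,\mathrm{tr}((u_{ii}+\tau_{RE}^2)^{-2})}$ of the same form) the marginal is not finite, while for any training sample $\mathbf{x}_\ell=(x_i,x_j)^T$ with $i\neq j$ (modeled by $\mathbf{x}_\ell\mid\mu,\tau_{RE}\sim N(\mu\mathbf{1}_2,\mathbf{U}_\ell+\tau_{RE}^2\mathbf{I})$ with prior $\pi^N(\tau_{RE})=\sqrt{\tau_{RE}^2\,\mathrm{tr}((\mathbf{U}_\ell+\tau_{RE}^2\mathbf{I})^{-2})}$) the marginal is finite and equals $$m(\mathbf{x}_\ell\mid M_{RE})=\int_0^\infty\frac{(2\pi)^{-\frac12}\big(\det(\mathbf{U}_\ell+\tau_{RE}^2\mathbf{I})\big)^{-1/2}}{\sqrt{\mathbf{1}_2^T(\mathbf{U}_\ell+\tau_{RE}^2\mathbf{I})^{-1}\mathbf{1}_2}}\exp\Big(-\tfrac12\mathbf{x}_\ell^T\mathbf{Q}_\ell(\tau_{RE}^2)\mathbf{x}_\ell\Big)\pi^N(\tau_{RE})\,d\tau_{RE},$$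 where $\mathbf{1}_2=(1,1)^T$, $\mathbf{I}$ is the $2\times2$ identity, $\mathbf{U}_\ell$ is the $2\times2$ principal submatrix of $\mathbf{U}$ formed by rows and columns $i,j$, and $\mathbf{Q}_\ell(\tau^2)=(\mathbf{U}_\ell+\tau^2\mathbf{I})^{-1}-\dfrac{(\mathbf{U}_\ell+\tau^2\mathbf{I})^{-1}\mathbf{1}_2\mathbf{1}_2^T(\mathbf{U}_\ell+\tau^2\mathbf{I})^{-1}}{\mathbf{1}_2^T(\mathbf{U}_\ell+\tau^2\mathbf{I})^{-1}\mathbf{1}_2}$.
   Context: Marginal distribution of data under a model with likelihood $f(\mathbf{x}\mid\boldsymbol\theta)$ and (possibly improper) prior $\pi(\boldsymbol\theta)$: $m(\mathbf{x})=\int f(\mathbf{x}\mid\boldsymbol\theta)\pi(\boldsymbol\theta)\,d\boldsymbol\theta$, with the prior taken exactly as written (no normalizing constant). A training sample is a subvector $\mathbf{x}_\ell$ of $\mathbf{x}$, modeled by the corresponding marginal sub-model; it is called proper if its marginal $m(\mathbf{x}_\ell)$ is finite and positive (equivalently the posterior of the parameters given $\mathbf{x}_\ell$ is proper), and minimal if it is proper and no proper subvector of it is proper. $u_{ii}$ denotes the $i$-th diagonal entry of $\mathbf{U}$; $\mathrm{tr}$ denotes the trace. *)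

theory Defs
  imports "HOL-Analysis.Analysis"
begin

definition sym_posdef :: "real^'k^'k \<Rightarrow> bool" where
  "sym_posdef U \<longleftrightarrow> transpose U = U \<and> (\<forall>v. v \<noteq> 0 \<longrightarrow> v \<bullet> (U *v v) > 0)"

definition re_cov :: "real^'k^'k \<Rightarrow> real \<Rightarrow> real^'k^'k" where
  "re_cov U t = U + (t^2) *\<^sub>R mat 1"

definition re_lik :: "real^'k^'k \<Rightarrow> real^'k \<Rightarrow> real \<Rightarrow> real \<Rightarrow> real" where
  "re_lik U x mu t =
     det (re_cov U t) powr (-1/2) / (2*pi) powr (real CARD('k) / 2)
     * exp (-(1/2) * ((x - mu *\<^sub>R vec 1) \<bullet> (matrix_inv (re_cov U t) *v (x - mu *\<^sub>R vec 1))))"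

definition re_prior :: "real^'k^'k \<Rightarrow> real \<Rightarrow> real" where
  "re_prior U t = sqrt (t^2 * trace (matrix_inv (re_cov U t) ** matrix_inv (re_cov U t)))"

definition re_marginal :: "real^'k^'k \<Rightarrow> real^'k \<Rightarrow> ennreal" where
  "re_marginal U x =
     (\<integral>\<^sup>+ t \<in> {0<..}. (\<integral>\<^sup>+ mu. ennreal (re_lik U x mu t * re_prior U t) \<partial>lborel) \<partial>lborel)"

definition re_Q :: "real^'k^'k \<Rightarrow> real \<Rightarrow> real^'k^'k" where
  "re_Q U t =
     matrix_inv (re_cov U t)
     - (1 / (vec 1 \<bullet> (matrix_inv (re_cov U t) *v vec 1))) *\<^sub>R
         (matrix_inv (re_cov U t) ** (\<chi> i j. 1) ** matrix_inv (re_cov U t))"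

definition re_marginal_formula :: "real^'k^'k \<Rightarrow> real^'k \<Rightarrow> ennreal" where
  "re_marginal_formula U x =
     (\<integral>\<^sup>+ t \<in> {0<..}. ennreal (
        (2*pi) powr (-(real CARD('k) - 1) / 2) * det (re_cov U t) powr (-1/2)
        / sqrt (vec 1 \<bullet> (matrix_inv (re_cov U t) *v vec 1))
        * exp (-(1/2) * (x \<bullet> (re_Q U t *v x)))
        * re_prior U t) \<partial>lborel)"

definition re_lik1 :: "real \<Rightarrow> real \<Rightarrow> real \<Rightarrow> real \<Rightarrow> real" where
  "re_lik1 u x mu t =
     (u + t^2) powr (-1/2) / (2*pi) powr (1/2) * exp (-(1/2) * (x - mu)^2 / (u + t^2))"

definition re_prior1 :: "real \<Rightarrow> real \<Rightarrow> real" where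
  "re_prior1 u t = sqrt (t^2 * inverse ((u + t^2)^2))"

definition re_marginal1 :: "real \<Rightarrow> real \<Rightarrow> ennreal" where
  "re_marginal1 u x =
     (\<integral>\<^sup>+ t \<in> {0<..}. (\<integral>\<^sup>+ mu. ennreal (re_lik1 u x mu t * re_prior1 u t) \<partial>lborel) \<partial>lborel)"

definition sub2_mat :: "real^'n^'n \<Rightarrow> 'n \<Rightarrow> 'n \<Rightarrow> real^2^2" where
  "sub2_mat U i j = (\<chi> a b. U $ (if a = 0 then i else j) $ (if b = 0 then i else j))"

definition sub2_vec :: "real^'n \<Rightarrow> 'n \<Rightarrow> 'n \<Rightarrow> real^2" where
  "sub2_vec x i j = (\<chi> a. x $ (if a = 0 then i else j))"

end

theory Submission
  imports Defs "HOL-Probability.Probability"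
begin

lemma nd_one: "s > 0 \<Longrightarrow> (\<integral>\<^sup>+ x. ennreal (normal_density m s x) \<partial>lborel) = 1"
  by (subst nn_integral_eq_integral) (auto intro: integrable_normal_density simp: integral_normal_density)

lemma gauss:
  fixes a b c d :: real
  assumes a: "a > 0"
  shows "(\<integral>\<^sup>+ mu. ennreal (c * exp (-(a*mu^2 - 2*b*mu + d)/2)) \<partial>lborel)
       = ennreal (c * sqrt (2*pi/a) * exp (-(d - b^2/a)/2))"
proof -
  define K where "K = sqrt (2*pi/a) * exp (-(d - b^2/a)/2)"
  have K: "K > 0" using a unfolding K_def by auto
  have eq: "exp (-(a*mu^2 - 2*b*mu + d)/2) = K * normal_density (b/a) (1/sqrt a) mu" for mu
  proof -
    have "normal_density (b/a) (1/sqrt a) mu = 1 / sqrt (2*pi/a) * exp (- ((mu - b/a)^2) * a / 2)"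
      using a by (simp add: normal_density_def power_divide field_simps)
    moreover have "exp (-(a*mu^2 - 2*b*mu + d)/2) = exp (-(d - b^2/a)/2) * exp (- ((mu - b/a)^2) * a / 2)"
      unfolding exp_add[symmetric] using a by (intro arg_cong[where f=exp]) (simp add: field_simps power2_eq_square)
    ultimately show ?thesis using a unfolding K_def by (simp add: field_simps)
  qed
  show ?thesis
  proof (cases "c \<ge> 0")
    case True
    have "(\<integral>\<^sup>+ mu. ennreal (c * exp (-(a*mu^2 - 2*b*mu + d)/2)) \<partial>lborel)
        = (\<integral>\<^sup>+ mu. ennreal (c*K) * ennreal (normal_density (b/a) (1/sqrt a) mu) \<partial>lborel)"
      proof (rule nn_integral_cong)
      fix mu show "ennreal (c * exp (-(a*mu^2 - 2*b*mu + d)/2)) = ennreal (c*K) * ennreal (normal_density (b/a) (1/sqrt a) mu)"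
        unfolding eq using True K by (simp add: ennreal_mult[symmetric] mult.assoc)
    qed
    also have "\<dots> = ennreal (c*K)"
      using a by (subst nn_integral_cmult) (auto simp: nd_one)
    finally show ?thesis unfolding K_def by (simp add: mult.assoc)
  next
    case False
    have "(\<integral>\<^sup>+ mu. ennreal (c * exp (-(a*mu^2 - 2*b*mu + d)/2)) \<partial>lborel) = 0"
      using False by (intro nn_integral_zero'  AE_I2) (simp add: ennreal_eq_0_iff mult_nonpos_nonneg)
    moreover have "c * sqrt (2*pi/a) * exp (-(d - b^2/a)/2) \<le> 0"
      using False a by (simp add: mult_nonpos_nonneg)
    ultimately show ?thesis by (simp add: ennreal_eq_0_iff)
  qed
qed

lemma cov_mult: "re_cov U t *v v = U *v v + t^2 *\<^sub>R v"
  unfolding re_cov_def by (simp add: matrix_vector_mult_add_rdistrib flip: scaleR_matrix_vector_assoc)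

lemma cov_pos:
  fixes U :: "real^'k^'k"
  assumes "sym_posdef U" "v \<noteq> 0"
  shows "v \<bullet> (re_cov U t *v v) > 0"
proof -
  have "v \<bullet> (U *v v) > 0" using assms unfolding sym_posdef_def by auto
  moreover have "v \<bullet> (t^2 *\<^sub>R v) \<ge> 0" by simp
  ultimately show ?thesis by (simp add: cov_mult inner_add_right add_pos_nonneg)
qed

lemma cov_sym:
  fixes U :: "real^'k^'k"
  assumes "sym_posdef U"
  shows "transpose (re_cov U t) = re_cov U t"
proof -
  have "transpose (A + B) = transpose A + transpose B" for A B :: "real^'k^'k"
    by (simp add: transpose_def vec_eq_iff)
  then show ?thesis using assms unfolding re_cov_def sym_posdef_def by (simp add: transpose_scalar)
qed

lemma cov_inv:
  fixes U :: "real^'k^'k"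
  assumes "sym_posdef U"
  shows "re_cov U t ** matrix_inv (re_cov U t) = mat 1 \<and> matrix_inv (re_cov U t) ** re_cov U t = mat 1"
proof -
  have "\<forall>x. re_cov U t *v x = 0 \<longrightarrow> x = 0"
    using cov_pos[OF assms] by (metis inner_zero_right less_irrefl)
  then have "invertible (re_cov U t)"
    using matrix_left_invertible_ker invertible_left_inverse by blast
  then show ?thesis unfolding invertible_def matrix_inv_def by (rule someI_ex)
qed

lemma inv_sym:
  fixes U :: "real^'k^'k"
  assumes "sym_posdef U"
  shows "transpose (matrix_inv (re_cov U t)) = matrix_inv (re_cov U t)"
proof -
  let ?S = "re_cov U t" let ?M = "matrix_inv ?S"
  have "transpose ?M ** ?S = mat 1"
    using cov_inv[OF assms] cov_sym[OF assms] by (metis matrix_transpose_mul transpose_mat)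
  have "transpose ?M = transpose ?M ** (?S ** ?M)"
    using cov_inv[OF assms] by (simp add: matrix_mul_rid)
  also have "\<dots> = (transpose ?M ** ?S) ** ?M" by (simp add: matrix_mul_assoc)
  also have "\<dots> = ?M" using \<open>transpose ?M ** ?S = mat 1\<close> by (simp add: matrix_mul_lid)
  finally show ?thesis .
qed

lemma inv_swap:
  fixes U :: "real^'k^'k"
  assumes "sym_posdef U"
  shows "x \<bullet> (matrix_inv (re_cov U t) *v y) = y \<bullet> (matrix_inv (re_cov U t) *v x)"
proof -
  have "x \<bullet> (matrix_inv (re_cov U t) *v y) = (x v* matrix_inv (re_cov U t)) \<bullet> y"
    by (simp add: dot_lmul_matrix)
  also have "x v* matrix_inv (re_cov U t) = transpose (matrix_inv (re_cov U t)) *v x"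
    by simp
  finally show ?thesis using inv_sym[OF assms] by (simp add: inner_commute)
qed

lemma inv_pos:
  fixes U :: "real^'k^'k"
  assumes "sym_posdef U" "v \<noteq> 0"
  shows "v \<bullet> (matrix_inv (re_cov U t) *v v) > 0"
proof -
  let ?S = "re_cov U t" let ?M = "matrix_inv ?S"
  define w where "w = ?M *v v"
  have Sw: "?S *v w = v" unfolding w_def using cov_inv[OF assms(1)] by (simp add: matrix_vector_mul_assoc)
  have "w \<noteq> 0" using Sw assms(2) by auto
  then have "w \<bullet> (?S *v w) > 0" by (rule cov_pos[OF assms(1)])
  then show ?thesis using Sw by (simp add: w_def inner_commute)
qed

lemma J_mult: "((\<chi> i j. 1) :: real^'k^'k) *v w = (vec 1 \<bullet> w) *\<^sub>R vec 1"
  by (simp add: vec_eq_iff matrix_vector_mult_def inner_vec_def)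

lemma quad_expand:
  fixes U :: "real^'k^'k"
  assumes "sym_posdef U"
  shows "(x - mu *\<^sub>R vec 1) \<bullet> (matrix_inv (re_cov U t) *v (x - mu *\<^sub>R vec 1))
     = (vec 1 \<bullet> (matrix_inv (re_cov U t) *v vec 1)) * mu^2
       - 2 * (vec 1 \<bullet> (matrix_inv (re_cov U t) *v x)) * mu
       + x \<bullet> (matrix_inv (re_cov U t) *v x)"
  using inv_swap[OF assms, of x t "vec 1"]
  by (simp add: matrix_vector_mult_diff_distrib matrix_vector_mult_scaleR inner_diff_left inner_diff_right algebra_simps power2_eq_square)

lemma Q_quad:
  fixes U :: "real^'k^'k"
  assumes "sym_posdef U"
  shows "x \<bullet> (re_Q U t *v x) = x \<bullet> (matrix_inv (re_cov U t) *v x)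
     - (vec 1 \<bullet> (matrix_inv (re_cov U t) *v x))^2 / (vec 1 \<bullet> (matrix_inv (re_cov U t) *v vec 1))"
proof -
  let ?M = "matrix_inv (re_cov U t)"
  have "(?M ** (\<chi> i j. 1) ** ?M) *v x = (vec 1 \<bullet> (?M *v x)) *\<^sub>R (?M *v vec 1)"
    by (simp add: matrix_vector_mul_assoc[symmetric] J_mult matrix_vector_mult_scaleR)
  then show ?thesis
    using inv_swap[OF assms, of x t "vec 1"]
    by (simp add: re_Q_def matrix_vector_mult_diff_rdistrib inner_diff_right
        flip: scaleR_matrix_vector_assoc) (simp add: power2_eq_square)
qed

lemma inner_eq:
  fixes U :: "real^'k^'k"
  assumes "sym_posdef U"
  shows "(\<integral>\<^sup>+ mu. ennreal (re_lik U x mu t * re_prior U t) \<partial>lborel)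
    = ennreal ((2*pi) powr (-(real CARD('k) - 1) / 2) * det (re_cov U t) powr (-1/2)
        / sqrt (vec 1 \<bullet> (matrix_inv (re_cov U t) *v vec 1))
        * exp (-(1/2) * (x \<bullet> (re_Q U t *v x)))
        * re_prior U t)"
proof -
  let ?M = "matrix_inv (re_cov U t)"
  define a where "a = vec 1 \<bullet> (?M *v vec 1)"
  define b where "b = vec 1 \<bullet> (?M *v x)"
  define d where "d = x \<bullet> (?M *v x)"
  define c where "c = det (re_cov U t) powr (-1/2) / (2*pi) powr (real CARD('k) / 2) * re_prior U t"
  have a: "a > 0" unfolding a_def
    by (rule inv_pos[OF assms]) (simp add: vec_eq_iff)
  have "(\<integral>\<^sup>+ mu. ennreal (re_lik U x mu t * re_prior U t) \<partial>lborel)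
     = (\<integral>\<^sup>+ mu. ennreal (c * exp (-(a*mu^2 - 2*b*mu + d)/2)) \<partial>lborel)"
    by (intro nn_integral_cong arg_cong[where f=ennreal])
       (unfold re_lik_def quad_expand[OF assms], simp add: c_def a_def b_def d_def algebra_simps)
  also have "\<dots> = ennreal (c * sqrt (2*pi/a) * exp (-(d - b^2/a)/2))"
    by (rule gauss[OF a])
  also have "c * sqrt (2*pi/a) * exp (-(d - b^2/a)/2) =
      (2*pi) powr (-(real CARD('k) - 1) / 2) * det (re_cov U t) powr (-1/2)
        / sqrt a * exp (-(1/2) * (x \<bullet> (re_Q U t *v x))) * re_prior U t"
  proof -
    have q: "x \<bullet> (re_Q U t *v x) = d - b^2/a"
      unfolding Q_quad[OF assms] a_def b_def d_def ..
    have p: "(2*pi) powr (-(real CARD('k) - 1) / 2) = sqrt (2*pi) / (2*pi) powr (real CARD('k) / 2)"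
    proof -
      have "-(real CARD('k) - 1) / 2 = 1/2 - real CARD('k) / 2" by (simp add: field_simps)
      then have "(2*pi) powr (-(real CARD('k) - 1) / 2) = (2*pi) powr (1/2) / (2*pi) powr (real CARD('k) / 2)"
        by (simp only: powr_diff)
      then show ?thesis by (simp add: powr_half_sqrt)
    qed
    show ?thesis unfolding q p c_def using a
      by (simp add: real_sqrt_divide field_simps)
  qed
  finally show ?thesis unfolding a_def .
qed

lemma inner1:
  assumes u: "u > 0"
  shows "(\<integral>\<^sup>+ mu. ennreal (re_lik1 u x mu t * re_prior1 u t) \<partial>lborel) = ennreal (re_prior1 u t)"
proof -
  define s where "s = u + t^2"
  have s: "s > 0" unfolding s_def using u by (simp add: add_pos_nonneg)
  define c where "c = s powr (-1/2) / (2*pi) powr (1/2) * re_prior1 u t"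
  have "(\<integral>\<^sup>+ mu. ennreal (re_lik1 u x mu t * re_prior1 u t) \<partial>lborel)
     = (\<integral>\<^sup>+ mu. ennreal (c * exp (-((1/s)*mu^2 - 2*(x/s)*mu + x^2/s)/2)) \<partial>lborel)"
  proof (intro nn_integral_cong arg_cong[where f=ennreal])
    fix mu
    have "-(1/2) * (x - mu)^2 / s = -((1/s)*mu^2 - 2*(x/s)*mu + x^2/s)/2"
      using s by (simp add: field_simps power2_eq_square)
    then show "re_lik1 u x mu t * re_prior1 u t = c * exp (-((1/s)*mu^2 - 2*(x/s)*mu + x^2/s)/2)"
      unfolding re_lik1_def c_def s_def[symmetric] by simp
  qed
  also have "\<dots> = ennreal (c * sqrt (2*pi/(1/s)) * exp (-(x^2/s - (x/s)^2/(1/s))/2))"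
    by (rule gauss) (use s in simp)
  also have "c * sqrt (2*pi/(1/s)) * exp (-(x^2/s - (x/s)^2/(1/s))/2) = re_prior1 u t"
  proof -
    have e: "x^2/s - (x/s)^2/(1/s) = 0" using s by (simp add: field_simps power2_eq_square)
    have "(s powr (-1/2)) * (sqrt (2*pi * s)) / ((2*pi) powr (1/2)) = (1::real)"
      using s by (simp add: powr_half_sqrt[symmetric] powr_minus powr_mult divide_simps)
    then show ?thesis unfolding e c_def by (simp add: divide_simps mult_ac)
  qed
  finally show ?thesis .
qed

lemma log_div:
  assumes u: "u > 0"
  shows "(\<integral>\<^sup>+ t \<in> {0<..}. ennreal (re_prior1 u t) \<partial>lborel) = \<infinity>"
proof (rule ccontr)
  let ?f = "\<lambda>t::real. t / (u + t^2)"
  assume "(\<integral>\<^sup>+ t \<in> {0<..}. ennreal (re_prior1 u t) \<partial>lborel) \<noteq> \<infinity>"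
  then obtain R where R: "(\<integral>\<^sup>+ t \<in> {0<..}. ennreal (re_prior1 u t) \<partial>lborel) = ennreal R" and R0: "R \<ge> 0"
    by (cases "(\<integral>\<^sup>+ t \<in> {0<..}. ennreal (re_prior1 u t) \<partial>lborel)") auto
  have lb: "ennreal ((ln (u + T^2) - ln (u + 1))/2) \<le> ennreal R" if T: "T \<ge> 1" for T
  proof -
    have "(?f has_integral ((ln (u + T^2) - ln (u + 1))/2)) {1..T}"
    proof -
      have "(?f has_integral ((\<lambda>t. ln (u + t^2)/2) T - (\<lambda>t. ln (u + t^2)/2) 1)) {1..T}"
      proof (rule fundamental_theorem_of_calculus[OF T])
        fix t :: real assume "t \<in> {1..T}"
        have pos: "u + t^2 > 0" using u by (simp add: add_pos_nonneg)
        have "((\<lambda>t. ln (u + t^2)/2) has_real_derivative (1/(u+t^2) * (2*t) / 2)) (at t within {1..T})"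
            using pos by (auto intro!: derivative_eq_intros simp: divide_simps)
        moreover have "1/(u+t^2) * (2*t) / 2 = ?f t" using pos by (simp add: divide_simps)
        ultimately show "((\<lambda>t. ln (u + t^2)/2) has_vector_derivative ?f t) (at t within {1..T})"
          by (simp add: has_real_derivative_iff_has_vector_derivative)
      qed
      then show ?thesis by (simp add: diff_divide_distrib)
    qed
    from nn_integral_has_integral_lebesgue[OF _ this]
    have "(\<integral>\<^sup>+ t. ennreal (indicator {1..T} t * ?f t) \<partial>lborel) = ennreal ((ln (u + T^2) - ln (u + 1))/2)"
      using u by (simp add: add_pos_nonneg)
    moreover have "(\<integral>\<^sup>+ t. ennreal (indicator {1..T} t * ?f t) \<partial>lborel)
        \<le> (\<integral>\<^sup>+ t \<in> {0<..}. ennreal (re_prior1 u t) \<partial>lborel)"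
    proof (rule nn_integral_mono)
      fix t :: real
      show "ennreal (indicator {1..T} t * ?f t) \<le> ennreal (re_prior1 u t) * indicator {0<..} t"
      proof (cases "t \<in> {1..T}")
        case True
        then have "t > 0" by auto
        then have "re_prior1 u t = ?f t"
          unfolding re_prior1_def using u
          by (simp add: real_sqrt_mult real_sqrt_divide divide_inverse[symmetric] add_pos_nonneg)
        then show ?thesis using True \<open>t > 0\<close> by simp
      qed simp
    qed
    ultimately show ?thesis using R by simp
  qed
  define K where "K = max 0 (2*R + ln (u+1)) + 1"
  define T where "T = exp (K/2)"
  have T1: "T \<ge> 1" unfolding T_def K_def by simp
  have "T^2 = exp K" unfolding T_def by (simp add: power2_eq_square exp_add[symmetric])
  then have "ln (u + T^2) \<ge> K" using u by (simp add: ln_ge_iff add_pos_nonneg)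
  then have big: "(ln (u + T^2) - ln (u + 1))/2 > R"
    unfolding K_def by (simp add: field_simps)
  show False using lb[OF T1] big R0 by (simp add: ennreal_le_iff)
qed

lemma g0_bound:
  fixes p q r t :: real
  defines "s \<equiv> t^2"
  defines "D \<equiv> (p+s)*(q+s) - r^2"
  defines "N \<equiv> (q+s)^2 + 2*r^2 + (p+s)^2"
  defines "L1 \<equiv> p+q+2*\<bar>r\<bar>+2"
  assumes p: "p > 0" and q: "q > 0" and c0: "p+q-2*r > 0" and e: "p*q - r^2 > 0" and t: "t > 0"
  shows "t * sqrt N / (D * sqrt (p+q-2*r+2 * s))
     \<le> L1 / ((p*q - r^2) * sqrt (p+q-2*r)) * indicator {0..1} t + L1 * (indicator {1..} t * (1 / t^2))"
proof -
  define L where "L = p+q+2*\<bar>r\<bar>+2 * s"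
  have s0: "s \<ge> 0" unfolding s_def by simp
  have Dexp: "D = (p*q - r^2) + s*(p+q) + s^2" unfolding D_def by (simp add: algebra_simps power2_eq_square)
  have "s*(p+q) \<ge> 0" using s0 p q by simp
  then have De: "D \<ge> (p*q - r^2) + s^2" using Dexp by linarith
  have Dpos: "D > 0" using De e by (metis add_pos_nonneg zero_le_power2 order_less_le_trans)
  have NL: "sqrt N \<le> L"
  proof -
    define A where "A = q + s" define B where "B = p + s" define R where "R = \<bar>r\<bar>"
    have A: "A \<ge> 0" "B \<ge> 0" "R \<ge> 0" using s0 p q by (auto simp: A_def B_def R_def)
    have "N = A^2 + 2*R^2 + B^2" unfolding N_def A_def B_def R_def by simp
    moreover have "L = A + B + 2*R" unfolding L_def A_def B_def R_def by simp
    ultimately have "L^2 - N = 2*R^2 + 2*A*B + 4*A*R + 4*B*R"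
      by (simp add: power2_eq_square algebra_simps)
    moreover have "2*R^2 + 2*A*B + 4*A*R + 4*B*R \<ge> 0" using A by simp
    ultimately have "N \<le> L^2" by linarith
    moreover have "L \<ge> 0" unfolding L_def using s0 p q by simp
    ultimately show ?thesis by (metis real_sqrt_abs real_sqrt_le_mono abs_of_nonneg)
  qed
  have sq0: "sqrt (p+q-2*r+2 * s) > 0" using c0 s0 by simp
  have g0: "t * sqrt N / (D * sqrt (p+q-2*r+2 * s)) \<le> t * L / (D * sqrt (p+q-2*r+2 * s))"
    using NL t Dpos sq0 by (intro divide_right_mono mult_left_mono) auto
  have L0: "L \<ge> 0" unfolding L_def using s0 p q by simp
  show ?thesis
  proof (cases "t \<le> 1")
    case True
    have "s \<le> 1" unfolding s_def using True t by (simp add: power_le_one)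
    then have "L \<le> L1" unfolding L_def L1_def by simp
    moreover have "t * L \<le> L" using True L0 t by (metis mult_left_le_one_le less_imp_le mult.commute)
    ultimately have L: "t * L \<le> L1" by linarith
    have den: "(p*q - r^2) * sqrt (p+q-2*r) \<le> D * sqrt (p+q-2*r+2 * s)"
      using De s0 e c0 Dpos by (intro mult_mono) (auto simp: add_nonneg_nonneg intro: order_trans[OF _ De])
    have "t * L / (D * sqrt (p+q-2*r+2 * s)) \<le> L1 / ((p*q - r^2) * sqrt (p+q-2*r))"
      using L den e c0 t L0 p q by (intro frac_le) (auto simp: L1_def)
    moreover have "L1 * (indicator {1..} t * (1 / t^2)) \<ge> 0"
      unfolding L1_def using p q by (simp add: indicator_def)
    ultimately show ?thesis using g0 True t by (simp add: indicator_def)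
  next
    case False
    have t1: "t \<ge> 1" using False by simp
    have "t^2 \<le> p+q-2*r+2 * s" using c0 unfolding s_def by simp
    then have sq: "sqrt (p+q-2*r+2 * s) \<ge> t"
      using t by (simp add: real_le_rsqrt)
    have "s^2 = t^4" unfolding s_def by simp
    then have Ds: "D \<ge> t^4" using De e by linarith
    have s1: "s \<ge> 1" unfolding s_def using t1 by (simp add: one_le_power)
    have "p+q+2*\<bar>r\<bar> \<le> (p+q+2*\<bar>r\<bar>) * s" using s1 p q by (simp add: mult_le_cancel_left1)
    then have "L \<le> L1 * s" unfolding L_def L1_def by (simp add: algebra_simps)
    then have L: "t * L \<le> t * (L1 * t^2)" using t unfolding s_def by simp
    have "t * L / (D * sqrt (p+q-2*r+2 * s)) \<le> t * (L1 * t^2) / (t^4 * t)"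
      using L t L0 mult_mono[OF Ds sq] Dpos by (intro frac_le) (auto simp: L1_def)
    also have "\<dots> = L1 * (1/t^2)" using t by (simp add: field_simps power2_eq_square power4_eq_xxxx)
    finally show ?thesis using g0 t1 False
      by (simp add: indicator_def)
  qed
qed

lemma bound_fin:
  fixes C1 C2 :: real
  assumes "C1 \<ge> 0" "C2 \<ge> 0"
  shows "(\<integral>\<^sup>+ t. ennreal (C1 * indicator {0..1} t + C2 * (indicator {1..} t * (1/t^2))) \<partial>lborel) < \<infinity>"
proof -
  have i2: "(\<integral>\<^sup>+ t. ennreal (indicator {1..} t * (1/t^2)) \<partial>lborel) = ennreal 1"
  proof -
    have "((\<lambda>x::real. 1 / x ^ 2) has_integral 1) {1..}"
      using has_integral_inverse_power_to_inf[of 2 1] by simp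
    from nn_integral_has_integral_lebesgue[OF _ this] show ?thesis by simp
  qed
  have "(\<integral>\<^sup>+ t. ennreal (C1 * indicator {0..1} t + C2 * (indicator {1..} t * (1/t^2))) \<partial>lborel)
      = (\<integral>\<^sup>+ t. ennreal C1 * indicator {0..1} t + ennreal C2 * ennreal (indicator {1..} t * (1/t^2)) \<partial>lborel)"
    using assms by (intro nn_integral_cong) (simp add: ennreal_plus ennreal_mult[symmetric] indicator_def)
  also have "\<dots> = (\<integral>\<^sup>+ t. ennreal C1 * indicator {0..1::real} t \<partial>lborel) + (\<integral>\<^sup>+ t. ennreal C2 * ennreal (indicator {1..} t * (1/t^2)) \<partial>lborel)"
  proof -
    have [measurable]: "{0..1::real} \<in> sets borel" "{1::real..} \<in> sets borel" by auto
    have m1: "(\<lambda>t::real. ennreal C1 * indicator {0..1} t) \<in> borel_measurable lborel" by measurable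
    have m2: "(\<lambda>t::real. ennreal C2 * ennreal (indicator {1..} t * (1/t^2))) \<in> borel_measurable lborel" by measurable
    show ?thesis using nn_integral_add[OF m1 m2] by simp
  qed
  also have "\<dots> = ennreal C1 + ennreal C2"
    using i2 by (simp add: nn_integral_cmult)
  finally show ?thesis by (simp add: ennreal_plus[symmetric] del: ennreal_plus)
qed

lemma quad2: "(w::real^2) \<bullet> (V *v w) = w$1 * (V$1$1 * w$1 + V$1$2 * w$2) + w$2 * (V$2$1 * w$1 + V$2$2 * w$2)"
  by (simp add: inner_vec_def sum_2 matrix_vector_mult_def)

lemma posdef2:
  fixes V :: "real^2^2"
  assumes "sym_posdef V"
  shows "V$2$1 = V$1$2" "V$1$1 > 0" "V$2$2 > 0" "V$1$1 + V$2$2 - 2*V$1$2 > 0"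
    "V$1$1 * V$2$2 - (V$1$2)^2 > 0"
proof -
  have pd: "\<And>v. v \<noteq> 0 \<Longrightarrow> v \<bullet> (V *v v) > 0" and tr: "transpose V = V"
    using assms unfolding sym_posdef_def by auto
  have "transpose V $ 2 $ 1 = V $ 1 $ 2" by (simp add: transpose_def)
  then show s: "V$2$1 = V$1$2" using tr by simp
  have nz: "vector [a, b] \<noteq> (0::real^2)" if "a \<noteq> 0 \<or> b \<noteq> 0" for a b
  proof
    assume "vector [a, b] = (0::real^2)"
    then have "(vector [a, b] :: real^2) $ 1 = 0" "(vector [a, b] :: real^2) $ 2 = 0" by simp_all
    then show False using that by (simp add: vector_2)
  qed
  show p: "V$1$1 > 0" using pd[OF nz[of 1 0]] by (simp add: quad2 vector_2)
  show "V$2$2 > 0" using pd[OF nz[of 0 1]] by (simp add: quad2 vector_2)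
  show "V$1$1 + V$2$2 - 2*V$1$2 > 0" using pd[OF nz[of 1 "-1"]] s by (simp add: quad2 vector_2)
  have "0 < V$1$1 * (V$1$1 * V$2$2 - (V$1$2)^2)"
    using pd[OF nz[of "V$1$2" "-V$1$1"]] p s by (simp add: quad2 vector_2 algebra_simps power2_eq_square)
  then show "V$1$1 * V$2$2 - (V$1$2)^2 > 0" using p by (simp add: zero_less_mult_iff)
qed

lemma inv2:
  fixes V :: "real^2^2" and t :: real
  assumes V: "sym_posdef V"
  defines "M0 \<equiv> (1/((V$1$1 + t^2)*(V$2$2 + t^2) - (V$1$2)^2)) *\<^sub>R
     (\<chi> i j. if i = 1 \<and> j = 1 then V$2$2 + t^2 else if i = 2 \<and> j = 2 then V$1$1 + t^2 else - V$1$2)"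
  shows "matrix_inv (re_cov V t) = M0"
    "det (re_cov V t) = (V$1$1 + t^2)*(V$2$2 + t^2) - (V$1$2)^2"
proof -
  note pd = posdef2[OF V]
  define p where "p = V$1$1" define q where "q = V$2$2" define r where "r = V$1$2" define s where "s = t^2"
  have V21: "V$2$1 = r" using pd unfolding r_def by simp
  have s0: "s \<ge> 0" unfolding s_def by simp
  have "(p+s)*(q+s) - r^2 = (p*q - r^2) + s*(p+q) + s^2" by (simp add: algebra_simps power2_eq_square)
  moreover have "p*q - r^2 > 0" "s*(p+q) \<ge> 0" using pd s0 by (auto simp: p_def q_def r_def)
  ultimately have D: "(p+s)*(q+s) - r^2 > 0" by (smt (verit) zero_le_power2)
  have n12: "(1::2) \<noteq> 2" by simp
  have S: "re_cov V t = (\<chi> i j. if i = 1 \<and> j = 1 then p + s else if i = 2 \<and> j = 2 then q + s else r)"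
    unfolding re_cov_def using V21 n12
    by (auto simp: vec_eq_iff forall_2 mat_def p_def q_def r_def s_def)
  have "re_cov V t ** M0 = mat 1"
    unfolding S M0_def p_def[symmetric] q_def[symmetric] r_def[symmetric] s_def[symmetric]
    using D n12 apply (simp add: vec_eq_iff forall_2 matrix_matrix_mult_def sum_2 mat_def)
    apply (intro conjI; simp add: divide_simps)
    by (simp_all add: algebra_simps power2_eq_square)
  then have "matrix_inv (re_cov V t) = matrix_inv (re_cov V t) ** (re_cov V t ** M0)"
    by (simp add: matrix_mul_rid)
  also have "\<dots> = (matrix_inv (re_cov V t) ** re_cov V t) ** M0" by (simp add: matrix_mul_assoc)
  finally show "matrix_inv (re_cov V t) = M0" using cov_inv[OF V] by (simp add: matrix_mul_lid)
  show "det (re_cov V t) = (V$1$1 + t^2)*(V$2$2 + t^2) - (V$1$2)^2"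
    unfolding det_2 S using n12 by (simp add: p_def q_def r_def s_def power2_eq_square)
qed

lemma Q_nonneg:
  fixes U :: "real^'k^'k"
  assumes "sym_posdef U"
  shows "x \<bullet> (re_Q U t *v x) \<ge> 0"
proof -
  let ?M = "matrix_inv (re_cov U t)"
  define a where "a = vec 1 \<bullet> (?M *v vec 1)"
  define b where "b = vec 1 \<bullet> (?M *v x)"
  define d where "d = x \<bullet> (?M *v x)"
  have a: "a > 0" unfolding a_def by (rule inv_pos[OF assms]) (simp add: vec_eq_iff)
  define w where "w = x - (b/a) *\<^sub>R vec 1"
  have "w \<bullet> (?M *v w) \<ge> 0"
    using inv_pos[OF assms, of w t] by (cases "w = 0") auto
  also have "w \<bullet> (?M *v w) = a * (b/a)^2 - 2 * b * (b/a) + d"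
    unfolding w_def quad_expand[OF assms] a_def b_def d_def ..
  also have "\<dots> = x \<bullet> (re_Q U t *v x)"
    unfolding Q_quad[OF assms] a_def[symmetric] b_def[symmetric] d_def[symmetric]
    using a by (simp add: field_simps power2_eq_square)
  finally show ?thesis .
qed

lemma fin2:
  fixes V :: "real^2^2" and y :: "real^2"
  assumes V: "sym_posdef V"
  shows "re_marginal_formula V y < \<infinity>"
proof -
  note pd = posdef2[OF V]
  define p where "p = V$1$1" define q where "q = V$2$2" define r where "r = V$1$2"
  have p: "p > 0" and q: "q > 0" and c0: "p+q-2*r > 0" and e: "p*q - r^2 > 0" and V21: "V$2$1 = r"
    using pd by (auto simp: p_def q_def r_def)
  define L1 where "L1 = p+q+2*\<bar>r\<bar>+2"
  define C1 where "C1 = L1 / ((p*q - r^2) * sqrt (p+q-2*r))"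
  have L1: "L1 \<ge> 0" unfolding L1_def using p q by simp
  have C1: "C1 \<ge> 0" unfolding C1_def using L1 e c0 by simp
  let ?g = "\<lambda>t. (2*pi) powr (-(real CARD(2) - 1) / 2) * det (re_cov V t) powr (-1/2)
        / sqrt (vec 1 \<bullet> (matrix_inv (re_cov V t) *v vec 1))
        * exp (-(1/2) * (y \<bullet> (re_Q V t *v y)))
        * re_prior V t"
  have pt: "?g t \<le> C1 * indicator {0..1} t + L1 * (indicator {1..} t * (1 / t^2))" if t: "t > 0" for t
  proof -
    define s where "s = t^2"
    define D where "D = (p+s)*(q+s) - r^2"
    define N where "N = (q+s)^2 + 2*r^2 + (p+s)^2"
    have s0: "s \<ge> 0" unfolding s_def by simp
    have "D = (p*q - r^2) + s*(p+q) + s^2" unfolding D_def by (simp add: algebra_simps power2_eq_square)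
    moreover have "s*(p+q) \<ge> 0" using s0 p q by simp
    ultimately have D: "D > 0" using e by (smt (verit) zero_le_power2)
    have n12: "(1::2) \<noteq> 2" by simp
    have M: "matrix_inv (re_cov V t) = (1/D) *\<^sub>R
     (\<chi> i j. if i = 1 \<and> j = 1 then q + s else if i = 2 \<and> j = 2 then p + s else - r)"
      using inv2(1)[OF V, of t] unfolding D_def s_def p_def q_def r_def .
    have det: "det (re_cov V t) = D" using inv2(2)[OF V, of t] unfolding D_def s_def p_def q_def r_def .
    have a: "vec 1 \<bullet> (matrix_inv (re_cov V t) *v vec 1) = (p+q-2*r+2 * s) / D"
      unfolding M using n12 D by (simp add: inner_vec_def sum_2 matrix_vector_mult_def divide_simps)
    have tr: "trace (matrix_inv (re_cov V t) ** matrix_inv (re_cov V t)) = N / D^2"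
      unfolding M N_def using n12 D
      by (simp add: trace_def sum_2 matrix_matrix_mult_def divide_simps) (simp add: power2_eq_square algebra_simps)
    define E where "E = exp (-(1/2) * (y \<bullet> (re_Q V t *v y)))"
    have E: "E > 0" "E \<le> 1" unfolding E_def using Q_nonneg[OF V, of y t] by auto
    define k where "k = (2*pi) powr (-(real CARD(2) - 1) / 2)"
    have k: "k > 0" "k \<le> 1" unfolding k_def using pi_gt3
      by (auto intro!: ge_one_powr_ge_zero simp: powr_minus_divide)
    have c0s: "p+q-2*r+2 * s > 0" using c0 s0 by simp
    have N0: "N \<ge> 0" unfolding N_def by simp
    have "?g t = k * E * (t * sqrt N / (D * sqrt (p+q-2*r+2 * s)))"
    proof -
      have "det (re_cov V t) powr (-1/2) / sqrt ((p+q-2*r+2 * s) / D) = 1 / sqrt (p+q-2*r+2 * s)"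
        using D c0s by (simp add: powr_minus_divide powr_half_sqrt[symmetric] det real_sqrt_divide powr_divide)
      moreover have "re_prior V t = t * sqrt N / D"
        unfolding re_prior_def tr using t D N0 by (simp add: real_sqrt_mult real_sqrt_divide)
      moreover have "?g t = k * (det (re_cov V t) powr (-1/2) / sqrt ((p+q-2*r+2 * s) / D)) * E * re_prior V t"
        unfolding a k_def E_def by simp
      ultimately show ?thesis by simp

    qed
    also have "\<dots> \<le> t * sqrt N / (D * sqrt (p+q-2*r+2 * s))"
    proof -
      have "k * E \<le> 1" using k E by (metis mult_le_one less_imp_le)
      moreover have "t * sqrt N / (D * sqrt (p+q-2*r+2 * s)) \<ge> 0" using t D N0 c0s by simp
      ultimately show ?thesis by (metis mult_left_le_one_le k(1) E(1) mult_nonneg_nonneg less_imp_le)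
    qed
    also have "\<dots> \<le> C1 * indicator {0..1} t + L1 * (indicator {1..} t * (1 / t^2))"
      using g0_bound[OF p q c0 e t] unfolding C1_def L1_def D_def N_def s_def .
    finally show ?thesis .
  qed
  have "re_marginal_formula V y \<le> (\<integral>\<^sup>+ t. ennreal (C1 * indicator {0..1} t + L1 * (indicator {1..} t * (1/t^2))) \<partial>lborel)"
    unfolding re_marginal_formula_def
  proof (rule nn_integral_mono)
    fix t :: real
    show "ennreal (?g t) * indicator {0<..} t \<le> ennreal (C1 * indicator {0..1} t + L1 * (indicator {1..} t * (1/t^2)))"
      using pt[of t] by (cases "t > 0") (auto simp: indicator_def ennreal_leI)
  qed
  also have "\<dots> < \<infinity>" by (rule bound_fin[OF C1 L1])
  finally show ?thesis .
qed

lemma two_facts: "(0::2) = 2" "(1::2) \<noteq> 2" by simp_all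

lemma sub2_posdef:
  fixes U :: "real^'n^'n"
  assumes U: "sym_posdef U" and ij: "i \<noteq> j"
  shows "sym_posdef (sub2_mat U i j)"
proof -
  have tr: "transpose U = U" and pd: "\<And>v. v \<noteq> 0 \<Longrightarrow> v \<bullet> (U *v v) > 0"
    using U unfolding sym_posdef_def by auto
  have Us: "U $ a $ b = U $ b $ a" for a b
  proof -
    have "transpose U $ a $ b = U $ b $ a" by (simp add: transpose_def)
    then show ?thesis using tr by simp
  qed
  let ?W = "sub2_mat U i j"
  have W: "?W$1$1 = U$j$j" "?W$1$2 = U$j$i" "?W$2$1 = U$i$j" "?W$2$2 = U$i$i"
    unfolding sub2_mat_def using two_facts by auto
  have "transpose ?W = ?W"
    by (simp add: transpose_def sub2_mat_def vec_eq_iff Us)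
  moreover have "v \<bullet> (?W *v v) > 0" if v: "v \<noteq> 0" for v :: "real^2"
  proof -
    define w :: "real^'n" where "w = (\<chi> k. (if k = i then v$2 else 0) + (if k = j then v$1 else 0))"
    have wi: "w$i = v$2" "w$j = v$1" unfolding w_def using ij by auto
    have "w \<noteq> 0"
    proof
      assume "w = 0"
      then have "v$1 = 0" "v$2 = 0" using wi by auto
      then have "v = 0" by (simp add: vec_eq_iff forall_2)
      then show False using v by simp
    qed
    then have "w \<bullet> (U *v w) > 0" by (rule pd)
    moreover have "(U *v w)$k = U$k$i * v$2 + U$k$j * v$1" for k
      unfolding w_def using ij
      by (simp add: matrix_vector_mult_def distrib_left sum.distrib if_distrib[of "\<lambda>x. _ * x"] sum.delta cong: if_cong)
    then have "w \<bullet> (U *v w) = v$2 * (U$i$i * v$2 + U$i$j * v$1) + v$1 * (U$j$i * v$2 + U$j$j * v$1)"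
      unfolding inner_vec_def w_def using ij
      by (simp add: distrib_right sum.distrib if_distrib[of "\<lambda>x. x * _"] sum.delta cong: if_cong)
    moreover have "v \<bullet> (?W *v v) = v$1 * (U$j$j * v$1 + U$j$i * v$2) + v$2 * (U$i$j * v$1 + U$i$i * v$2)"
      unfolding quad2 W ..
    ultimately show ?thesis by (simp add: algebra_simps)
  qed
  ultimately show ?thesis unfolding sym_posdef_def by auto
qed

lemma marg_eq:
  fixes U :: "real^'k^'k"
  assumes "sym_posdef U"
  shows "re_marginal U x = re_marginal_formula U x"
  unfolding re_marginal_def re_marginal_formula_def
  by (intro nn_integral_cong) (simp only: inner_eq[OF assms])

lemma diag_pos:
  fixes U :: "real^'k^'k"
  assumes "sym_posdef U"
  shows "U $ i $ i > 0"
proof -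
  have "axis i 1 \<bullet> (U *v axis i 1) > 0"
    using assms unfolding sym_posdef_def by (simp add: axis_eq_0_iff)
  moreover have "axis i 1 \<bullet> (U *v axis i 1) = (U *v axis i 1) $ i"
    by (simp add: inner_axis')
  moreover have "(U *v axis i 1) $ i = U $ i $ i"
    by (simp add: matrix_vector_mult_def axis_def if_distrib[of "\<lambda>y. _ * y"] cong: if_cong)
  ultimately show ?thesis by simp
qed

theorem theorem2:
  fixes U :: "real^'n^'n" and x :: "real^'n"
  assumes "CARD('n) > 2"
    and "sym_posdef U"
  shows "re_marginal U x = re_marginal_formula U x
    \<and> (\<forall>i. re_marginal1 (U $ i $ i) (x $ i) = \<infinity>)
    \<and> (\<forall>i j. i \<noteq> j \<longrightarrow>
          re_marginal (sub2_mat U i j) (sub2_vec x i j) < \<infinity>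
        \<and> re_marginal (sub2_mat U i j) (sub2_vec x i j)
            = re_marginal_formula (sub2_mat U i j) (sub2_vec x i j))"
proof (intro conjI allI impI)
  show "re_marginal U x = re_marginal_formula U x" by (rule marg_eq[OF assms(2)])
next
  fix i
  have u: "U $ i $ i > 0" by (rule diag_pos[OF assms(2)])
  have "re_marginal1 (U $ i $ i) (x $ i) = (\<integral>\<^sup>+ t \<in> {0<..}. ennreal (re_prior1 (U $ i $ i) t) \<partial>lborel)"
    unfolding re_marginal1_def by (intro nn_integral_cong) (simp only: inner1[OF u])
  also have "\<dots> = \<infinity>" by (rule log_div[OF u])
  finally show "re_marginal1 (U $ i $ i) (x $ i) = \<infinity>" .
next
  fix i j :: 'n assume ij: "i \<noteq> j"
  have V: "sym_posdef (sub2_mat U i j)" by (rule sub2_posdef[OF assms(2) ij])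
  show "re_marginal (sub2_mat U i j) (sub2_vec x i j) = re_marginal_formula (sub2_mat U i j) (sub2_vec x i j)"
    by (rule marg_eq[OF V])
  then show "re_marginal (sub2_mat U i j) (sub2_vec x i j) < \<infinity>"
    using fin2[OF V] by simp
qed

end
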